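(* Let $(C_X,C_Z)$ be a GF(4) CSS code of length $n$ and distance $d$. Then $S'_X\perp S'_Z$, so $(S'_X,S'_Z)$ defines a CSS qubit code on $4n$ qubits, and its distance is at least $2d$.
   Context: $\mathrm{GF}(4)=\{0,1,\omega,\omega^2\}$ with $\omega^2=\omega+1$. A GF(4) CSS code of length $n$ is a pair of $\mathrm{GF}(4)$-linear subspaces $C_X,C_Z\subseteq\mathrm{GF}(4)^n$ with $\sum_ju_jv_j=0$ for all $u\in C_X$, $v\in C_Z$; with $C^\perp$ the Euclidean dual over GF(4) and $\mathrm{wt}$ the number of nonzero coordinates, $d_X=\min\{\mathrm{wt}(u):u\in C_Z^\perp\setminus C_X\}$, $d_Z=\min\{\mathrm{wt}(u):u\in C_X^\perp\setminus C_Z\}$, $d=\min(d_X,d_Z)$. Define $\mathbb F_2$-linear maps $\phi_X,\phi_Z:\mathrm{GF}(4)\to\mathbb F_2^4$ by $\phi_X(0)=0000$, $\phi_X(\omega)=1100$, $\phi_X(\omega^2)=1010$, $\phi_X(1)=0110$ and $\phi_Z(0)=0000$, $\phi_Z(\omega^2)=0011$, $\phi_Z(\omega)=0101$, $\phi_Z(1)=0110$ (binarization in the basis $\{\omega,\omega^2\}$ followed by encoding each qubit pair in the $[[4,2,2]]$ code). For $u\in\mathrm{GF}(4)^n$ let $\Phi_X(u)=(\phi_X(u_1),\dots,\phi_X(u_n))\in\mathbb F_2^{4n}$, similarly $\Phi_Z$. Let $B_j\in\mathbb F_2^{4n}$ be the all-ones indicator of the $j$-th block of 4 coordinates. Set $S'_X=\Phi_X(C_X)+\mathrm{span}\{B_1,\dots,B_n\}$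 and $S'_Z=\Phi_Z(C_Z)+\mathrm{span}\{B_1,\dots,B_n\}$ as the $X$- and $Z$-stabilizer spaces. The qubit code distance is $\min(d'_X,d'_Z)$ with $d'_X=\min\{|v|:v\in S_Z'^{\perp}\setminus S'_X\}$ and $d'_Z=\min\{|v|:v\in S_X'^{\perp}\setminus S'_Z\}$. *)

theory Defs
  imports Main "HOL-Library.Z2" "HOL-Library.Extended_Nat"
begin

datatype gf4 = G0 | G1 | GW | GW2   (* GW = omega, GW2 = omega^2 *)

fun gf4_add :: "gf4 \<Rightarrow> gf4 \<Rightarrow> gf4" where
  "gf4_add G0 y = y"
| "gf4_add x G0 = x"
| "gf4_add G1 G1 = G0"
| "gf4_add G1 GW = GW2"
| "gf4_add G1 GW2 = GW"
| "gf4_add GW G1 = GW2"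
| "gf4_add GW GW = G0"
| "gf4_add GW GW2 = G1"
| "gf4_add GW2 G1 = GW"
| "gf4_add GW2 GW = G1"
| "gf4_add GW2 GW2 = G0"

fun gf4_mul :: "gf4 \<Rightarrow> gf4 \<Rightarrow> gf4" where
  "gf4_mul G0 y = G0"
| "gf4_mul x G0 = G0"
| "gf4_mul G1 y = y"
| "gf4_mul x G1 = x"
| "gf4_mul GW GW = GW2"
| "gf4_mul GW GW2 = G1"
| "gf4_mul GW2 GW = G1"
| "gf4_mul GW2 GW2 = GW"

fun gf4_inv :: "gf4 \<Rightarrow> gf4" where
  "gf4_inv G0 = G0"
| "gf4_inv G1 = G1"
| "gf4_inv GW = GW2"
| "gf4_inv GW2 = GW"

instantiation gf4 :: field
begin
definition zero_gf4 :: gf4 where "zero_gf4 = G0"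
definition one_gf4 :: gf4 where "one_gf4 = G1"
definition plus_gf4 :: "gf4 \<Rightarrow> gf4 \<Rightarrow> gf4" where "plus_gf4 x y = gf4_add x y"
definition minus_gf4 :: "gf4 \<Rightarrow> gf4 \<Rightarrow> gf4" where "minus_gf4 x y = gf4_add x y"
definition uminus_gf4 :: "gf4 \<Rightarrow> gf4" where "uminus_gf4 x = x"
definition times_gf4 :: "gf4 \<Rightarrow> gf4 \<Rightarrow> gf4" where "times_gf4 x y = gf4_mul x y"
definition inverse_gf4 :: "gf4 \<Rightarrow> gf4" where "inverse_gf4 x = gf4_inv x"
definition divide_gf4 :: "gf4 \<Rightarrow> gf4 \<Rightarrow> gf4" where "divide_gf4 x y = gf4_mul x (gf4_inv y)"
instance
proof
  fix a b c :: gf4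
  show "a * b * c = a * (b * c)"
    by (cases a; cases b; cases c) (simp_all add: times_gf4_def)
  show "a * b = b * a"
    by (cases a; cases b) (simp_all add: times_gf4_def)
  show "1 * a = a"
    by (cases a) (simp_all add: times_gf4_def one_gf4_def)
  show "a + b + c = a + (b + c)"
    by (cases a; cases b; cases c) (simp_all add: plus_gf4_def)
  show "a + b = b + a"
    by (cases a; cases b) (simp_all add: plus_gf4_def)
  show "0 + a = a"
    by (cases a) (simp_all add: plus_gf4_def zero_gf4_def)
  show "- a + a = 0"
    by (cases a) (simp_all add: plus_gf4_def zero_gf4_def uminus_gf4_def)
  show "a - b = a + - b"
    by (simp add: plus_gf4_def minus_gf4_def uminus_gf4_def)
  show "(a + b) * c = a * c + b * c"
    by (cases a; cases b; cases c) (simp_all add: plus_gf4_def times_gf4_def)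
  show "(0::gf4) \<noteq> 1"
    by (simp add: zero_gf4_def one_gf4_def)
  show "a \<noteq> 0 \<Longrightarrow> inverse a * a = 1"
    by (cases a) (simp_all add: inverse_gf4_def times_gf4_def zero_gf4_def one_gf4_def)
  show "divide a b = a * inverse b"
    by (simp add: divide_gf4_def times_gf4_def inverse_gf4_def)
  show "inverse (0::gf4) = 0"
    by (simp add: inverse_gf4_def zero_gf4_def)
qed
end

lemma gf4_omega_sq: "GW * GW = GW + 1"
  by (simp add: times_gf4_def plus_gf4_def one_gf4_def)

definition vecs :: "nat \<Rightarrow> (nat \<Rightarrow> 'a::zero) set" where
  "vecs m = {v. \<forall>i\<ge>m. v i = 0}"

definition wt :: "nat \<Rightarrow> (nat \<Rightarrow> 'a::zero) \<Rightarrow> nat" where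
  "wt m v = card {i. i < m \<and> v i \<noteq> 0}"

definition dotp :: "nat \<Rightarrow> (nat \<Rightarrow> 'a::comm_ring_1) \<Rightarrow> (nat \<Rightarrow> 'a) \<Rightarrow> 'a" where
  "dotp m u v = (\<Sum>i<m. u i * v i)"

definition dual :: "nat \<Rightarrow> (nat \<Rightarrow> 'a::comm_ring_1) set \<Rightarrow> (nat \<Rightarrow> 'a) set" where
  "dual m C = {v \<in> vecs m. \<forall>u\<in>C. dotp m u v = 0}"

definition lin_subspace :: "nat \<Rightarrow> (nat \<Rightarrow> 'a::field) set \<Rightarrow> bool" where
  "lin_subspace m C \<longleftrightarrow> C \<subseteq> vecs m \<and> (\<lambda>_. 0) \<in> C \<and>
     (\<forall>u\<in>C. \<forall>v\<in>C. (\<lambda>i. u i + v i) \<in> C) \<and>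
     (\<forall>c. \<forall>u\<in>C. (\<lambda>i. c * u i) \<in> C)"

definition css_code :: "nat \<Rightarrow> (nat \<Rightarrow> 'a::field) set \<Rightarrow> (nat \<Rightarrow> 'a) set \<Rightarrow> bool" where
  "css_code m CX CZ \<longleftrightarrow> lin_subspace m CX \<and> lin_subspace m CZ \<and>
     (\<forall>u\<in>CX. \<forall>v\<in>CZ. dotp m u v = 0)"

text \<open>Distances (minimum over an empty set is infinity).\<close>
definition dist_X :: "nat \<Rightarrow> (nat \<Rightarrow> 'a::comm_ring_1) set \<Rightarrow> (nat \<Rightarrow> 'a) set \<Rightarrow> enat" where
  "dist_X m CX CZ = Inf ((\<lambda>u. enat (wt m u)) ` (dual m CZ - CX))"

definition dist_Z :: "nat \<Rightarrow> (nat \<Rightarrow> 'a::comm_ring_1) set \<Rightarrow> (nat \<Rightarrow> 'a) set \<Rightarrow> enat" where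
  "dist_Z m CX CZ = Inf ((\<lambda>u. enat (wt m u)) ` (dual m CX - CZ))"

definition css_dist :: "nat \<Rightarrow> (nat \<Rightarrow> 'a::comm_ring_1) set \<Rightarrow> (nat \<Rightarrow> 'a) set \<Rightarrow> enat" where
  "css_dist m CX CZ = min (dist_X m CX CZ) (dist_Z m CX CZ)"

fun phiX :: "gf4 \<Rightarrow> bit list" where
  "phiX G0 = [0,0,0,0]"
| "phiX GW = [1,1,0,0]"
| "phiX GW2 = [1,0,1,0]"
| "phiX G1 = [0,1,1,0]"

fun phiZ :: "gf4 \<Rightarrow> bit list" where
  "phiZ G0 = [0,0,0,0]"
| "phiZ GW2 = [0,0,1,1]"
| "phiZ GW = [0,1,0,1]"
| "phiZ G1 = [0,1,1,0]"

definition PhiX :: "nat \<Rightarrow> (nat \<Rightarrow> gf4) \<Rightarrow> (nat \<Rightarrow> bit)" where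
  "PhiX n u = (\<lambda>i. if i < 4 * n then phiX (u (i div 4)) ! (i mod 4) else 0)"

definition PhiZ :: "nat \<Rightarrow> (nat \<Rightarrow> gf4) \<Rightarrow> (nat \<Rightarrow> bit)" where
  "PhiZ n u = (\<lambda>i. if i < 4 * n then phiZ (u (i div 4)) ! (i mod 4) else 0)"

definition blockB :: "nat \<Rightarrow> (nat \<Rightarrow> bit)" where
  "blockB j = (\<lambda>i. if i div 4 = j then 1 else 0)"

text \<open>span{B_1..B_n} over F_2 = sums over subsets J of the blocks.\<close>
definition SX' :: "nat \<Rightarrow> (nat \<Rightarrow> gf4) set \<Rightarrow> (nat \<Rightarrow> bit) set" where
  "SX' n CX = {(\<lambda>i. PhiX n c i + (\<Sum>j\<in>J. blockB j i)) | c J. c \<in> CX \<and> J \<subseteq> {..<n}}"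

definition SZ' :: "nat \<Rightarrow> (nat \<Rightarrow> gf4) set \<Rightarrow> (nat \<Rightarrow> bit) set" where
  "SZ' n CZ = {(\<lambda>i. PhiZ n c i + (\<Sum>j\<in>J. blockB j i)) | c J. c \<in> CZ \<and> J \<subseteq> {..<n}}"

end

theory Submission
  imports Defs
begin

definition phs :: "bool \<Rightarrow> gf4 \<Rightarrow> bit list" where
  "phs s = (if s then phiX else phiZ)"

definition Phi_s :: "nat \<Rightarrow> bool \<Rightarrow> (nat \<Rightarrow> gf4) \<Rightarrow> (nat \<Rightarrow> bit)" where
  "Phi_s n s u = (\<lambda>i. if i < 4 * n then phs s (u (i div 4)) ! (i mod 4) else 0)"

definition S_s :: "nat \<Rightarrow> bool \<Rightarrow> (nat \<Rightarrow> gf4) set \<Rightarrow> (nat \<Rightarrow> bit) set" where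
  "S_s n s C = {(\<lambda>i. Phi_s n s c i + (\<Sum>j\<in>J. blockB j i)) | c J. c \<in> C \<and> J \<subseteq> {..<n}}"

lemma Phi_s_True: "Phi_s n True = PhiX n"
  by (intro ext) (simp add: Phi_s_def PhiX_def phs_def)
lemma Phi_s_False: "Phi_s n False = PhiZ n"
  by (intro ext) (simp add: Phi_s_def PhiZ_def phs_def)
lemma SX'_eq: "SX' n C = S_s n True C"
  by (simp only: SX'_def S_s_def Phi_s_True)
lemma SZ'_eq: "SZ' n C = S_s n False C"
  by (simp only: SZ'_def S_s_def Phi_s_False)

fun tr :: "gf4 \<Rightarrow> bit" where
  "tr G0 = 0" | "tr G1 = 0" | "tr GW = 1" | "tr GW2 = 1"

lemma tr_add: "tr (x + y) = tr x + tr y"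
  by (cases x; cases y) (simp_all add: plus_gf4_def)

lemma tr_zero: "tr 0 = 0" by (simp add: zero_gf4_def)

lemma tr_sum: "tr (\<Sum>i<(n::nat). f i) = (\<Sum>i<n. tr (f i))"
  by (induction n) (simp_all add: tr_zero tr_add)

lemma tr_nondeg: "tr x = 0 \<Longrightarrow> tr (GW * x) = 0 \<Longrightarrow> x = 0"
  by (cases x) (simp_all add: times_gf4_def zero_gf4_def)

definition tbl :: "bit \<Rightarrow> bit \<Rightarrow> gf4" where
  "tbl x y = (if x = 0 then (if y = 0 then G0 else GW2) else (if y = 0 then GW else G1))"

definition fl :: "bool \<Rightarrow> bit \<Rightarrow> bit \<Rightarrow> bit \<Rightarrow> bit \<Rightarrow> bit" where
  "fl s a b c d = (if s then d else a)"

definition dec :: "bool \<Rightarrow> bit \<Rightarrow> bit \<Rightarrow> bit \<Rightarrow> bit \<Rightarrow> gf4" where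
  "dec s a b c d = tbl (b + fl s a b c d) (c + fl s a b c d)"

definition bw :: "bit \<Rightarrow> nat" where "bw a = (if a \<noteq> 0 then 1 else 0)"

lemma blk_orth:
  "(phs True x ! 0 + e) * (phs False y ! 0 + e') + (phs True x ! 1 + e) * (phs False y ! 1 + e')
   + (phs True x ! 2 + e) * (phs False y ! 2 + e') + (phs True x ! 3 + e) * (phs False y ! 3 + e')
   = tr (x * y)"
  by (cases x; cases y; cases e; cases e') (simp_all add: phs_def times_gf4_def)

lemma blk_dot:
  "a + b + c + d = 0 \<Longrightarrow>
   phs (\<not> s) y ! 0 * a + phs (\<not> s) y ! 1 * b + phs (\<not> s) y ! 2 * c + phs (\<not> s) y ! 3 * d
   = tr (y * dec s a b c d)"
  by (cases s; cases y; cases a; cases b; cases c; cases d)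
     (simp_all add: phs_def times_gf4_def dec_def fl_def tbl_def)

lemma blk_rep:
  "a + b + c + d = 0 \<Longrightarrow> k < 4 \<Longrightarrow>
   phs s (dec s a b c d) ! k + (if fl s a b c d = 1 then 1 else 0) = [a,b,c,d] ! k"
  by (cases s; cases a; cases b; cases c; cases d)
     (auto simp: phs_def dec_def fl_def tbl_def less_Suc_eq nth_Cons')

lemma blk_wt:
  "a + b + c + d = 0 \<Longrightarrow>
   2 * (if dec s a b c d \<noteq> 0 then 1 else 0) \<le> bw a + bw b + bw c + bw d"
  by (cases s; cases a; cases b; cases c; cases d)
     (simp_all add: dec_def fl_def tbl_def bw_def zero_gf4_def)

lemma phs_zero: "k < 4 \<Longrightarrow> phs s 0 ! k = 0"
  by (auto simp: phs_def zero_gf4_def less_Suc_eq nth_Cons')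

lemma sum4: "(\<Sum>i<4*n. f i) = (\<Sum>j<n. f (4*j) + f (4*j+1) + f (4*j+2) + f (4*j+3))"
  for f :: "nat \<Rightarrow> 'a::comm_monoid_add"
proof (induction n)
  case 0 then show ?case by simp
next
  case (Suc n)
  have e: "4 * Suc n = Suc (Suc (Suc (Suc (4*n))))" by simp
  show ?case unfolding e using Suc by (simp add: numeral_3_eq_3 ac_simps)
qed

lemma wt_sum: "wt m v = (\<Sum>i<m. if v i \<noteq> 0 then 1 else 0)"
proof -
  have "{i. i < m \<and> v i \<noteq> 0} = {i\<in>{..<m}. v i \<noteq> 0}" by auto
  then show ?thesis unfolding wt_def by (simp only: card_eq_sum sum.inter_filter[OF finite_lessThan])
qed

lemma divmod4[simp]:
  "Suc (4*j) div 4 = j" "Suc (Suc (4*j)) div 4 = j" "Suc (Suc (Suc (4*j))) div 4 = j"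
  "Suc (4*j) mod 4 = 1" "Suc (Suc (4*j)) mod 4 = 2" "Suc (Suc (Suc (4*j))) mod 4 = 3"
  by presburger+

lemma Phi_s_4:
  assumes "j < n"
  shows "Phi_s n s u (4*j) = phs s (u j) ! 0" "Phi_s n s u (4*j+1) = phs s (u j) ! 1"
    "Phi_s n s u (4*j+2) = phs s (u j) ! 2" "Phi_s n s u (4*j+3) = phs s (u j) ! 3"
  using assms by (simp_all add: Phi_s_def)

lemma blockB_4:
  "blockB j' (4*j) = (if j = j' then 1 else 0)" "blockB j' (4*j+1) = (if j = j' then 1 else 0)"
  "blockB j' (4*j+2) = (if j = j' then 1 else 0)" "blockB j' (4*j+3) = (if j = j' then 1 else 0)"
  by (simp_all add: blockB_def)

lemma sum_blockB: "finite J \<Longrightarrow> (\<Sum>j\<in>J. blockB j i) = (if i div 4 \<in> J then 1 else 0)"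
  unfolding blockB_def by (simp add: sum.delta)

lemma dotp_4: "dotp (4*n) w v = (\<Sum>j<n. w (4*j) * v (4*j) + w (4*j+1) * v (4*j+1)
   + w (4*j+2) * v (4*j+2) + w (4*j+3) * v (4*j+3))"
  unfolding dotp_def by (rule sum4)

lemma key:
  assumes L1: "lin_subspace n C1" and L2: "lin_subspace n C2"
    and vd: "v \<in> dual (4*n) (S_s n (\<not> s) C2)" and vn: "v \<notin> S_s n s C1"
  shows "\<exists>u \<in> dual n C2 - C1. 2 * wt n u \<le> wt (4*n) v"
proof -
  define A where "A j = v (4*j)" for j
  define B where "B j = v (4*j+1)" for j
  define C where "C j = v (4*j+2)" for j
  define D where "D j = v (4*j+3)" for j
  define u where "u j = (if j < n then dec s (A j) (B j) (C j) (D j) else 0)" for j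
  define J where "J = {j. j < n \<and> fl s (A j) (B j) (C j) (D j) = 1}"
  have vv: "v \<in> vecs (4*n)" and orth: "\<And>w. w \<in> S_s n (\<not> s) C2 \<Longrightarrow> dotp (4*n) w v = 0"
    using vd unfolding dual_def by auto
  have z2: "(\<lambda>_. 0) \<in> C2" using L2 unfolding lin_subspace_def by auto
  have Phi0: "Phi_s n s' (\<lambda>_. 0) i = 0" for s' i
    by (simp add: Phi_s_def phs_zero)
  have even: "A j + B j + C j + D j = 0" if jn: "j < n" for j
  proof -
    have "blockB j \<in> S_s n (\<not> s) C2"
      unfolding S_s_def
      apply (rule CollectI, rule exI[of _ "\<lambda>_. 0"], rule exI[of _ "{j}"])
      using z2 jn apply (simp add: Phi0)
      apply (rule ext)
      subgoal for i by (cases "blockB j i") simp_all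
      done
    then have "dotp (4*n) (blockB j) v = 0" by (rule orth)
    moreover have "dotp (4*n) (blockB j) v =
        (\<Sum>j'<n. if j' = j then A j' + B j' + C j' + D j' else 0)"
      unfolding dotp_4 by (rule sum.cong) (simp_all add: blockB_def A_def B_def C_def D_def)
    moreover have "(\<Sum>j'<n. if j' = j then A j' + B j' + C j' + D j' else 0) = A j + B j + C j + D j"
      using jn by (simp add: sum.delta)
    ultimately show ?thesis by simp
  qed
  have trz: "tr (dotp n c u) = 0" if c: "c \<in> C2" for c
  proof -
    have "Phi_s n (\<not> s) c \<in> S_s n (\<not> s) C2"
      unfolding S_s_def
      apply (rule CollectI, rule exI[of _ c], rule exI[of _ "{}"])
      using c apply simp
      apply (rule ext)
      subgoal for i by (cases "Phi_s n (\<not> s) c i") simp_all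
      done
    then have "dotp (4*n) (Phi_s n (\<not> s) c) v = 0" by (rule orth)
    moreover have "dotp (4*n) (Phi_s n (\<not> s) c) v = (\<Sum>j<n. tr (c j * u j))"
      unfolding dotp_4
    proof (rule sum.cong)
      fix j assume "j \<in> {..<n}"
      then have jn: "j < n" by simp
      show "Phi_s n (\<not> s) c (4 * j) * v (4 * j) + Phi_s n (\<not> s) c (4 * j + 1) * v (4 * j + 1) +
          Phi_s n (\<not> s) c (4 * j + 2) * v (4 * j + 2) + Phi_s n (\<not> s) c (4 * j + 3) * v (4 * j + 3) =
          tr (c j * u j)"
        unfolding Phi_s_4[OF jn]
        using blk_dot[OF even[OF jn], of s "c j"] jn
        by (simp add: A_def B_def C_def D_def u_def)
    qed simp
    moreover have "(\<Sum>j<n. tr (c j * u j)) = tr (dotp n c u)"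
      unfolding dotp_def by (simp add: tr_sum)
    ultimately show ?thesis by simp
  qed
  have udual: "u \<in> dual n C2"
    unfolding dual_def
  proof (intro CollectI conjI ballI)
    show "u \<in> vecs n" by (simp add: vecs_def u_def zero_gf4_def)
    fix c assume c: "c \<in> C2"
    have cw: "(\<lambda>i. GW * c i) \<in> C2" using L2 c unfolding lin_subspace_def by auto
    have "dotp n (\<lambda>i. GW * c i) u = GW * dotp n c u"
      unfolding dotp_def by (simp add: sum_distrib_left mult.assoc)
    then show "dotp n c u = 0"
      using trz[OF c] trz[OF cw] tr_nondeg by metis
  qed
  have unot: "u \<notin> C1"
  proof
    assume uc: "u \<in> C1"
    have finJ: "finite J" unfolding J_def by simp
    have "v = (\<lambda>i. Phi_s n s u i + (\<Sum>j\<in>J. blockB j i))"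
    proof
      fix i
      show "v i = Phi_s n s u i + (\<Sum>j\<in>J. blockB j i)"
      proof (cases "i < 4*n")
        case True
        define j where "j = i div 4"
        define k where "k = i mod 4"
        have ik: "i = 4*j+k" and k4: "k < 4" and jn: "j < n"
          using True unfolding j_def k_def by auto
        have vi: "v i = [A j, B j, C j, D j] ! k"
        proof -
          have "k = 0 \<or> k = 1 \<or> k = 2 \<or> k = 3" using k4 by auto
          then show ?thesis unfolding ik A_def B_def C_def D_def
            by (elim disjE) simp_all
        qed
        have "Phi_s n s u i = phs s (dec s (A j) (B j) (C j) (D j)) ! k"
          using True jn unfolding Phi_s_def j_def k_def u_def by simp
        moreover have "(\<Sum>j\<in>J. blockB j i) = (if fl s (A j) (B j) (C j) (D j) = 1 then 1 else 0)"
        proof -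
          have "(j \<in> J) = (fl s (A j) (B j) (C j) (D j) = 1)" using jn unfolding J_def by simp
          then show ?thesis unfolding sum_blockB[OF finJ] j_def by simp
        qed
        ultimately show ?thesis using vi blk_rep[OF even[OF jn] k4, of s] by simp
      next
        case False
        have "v i = 0" using vv False unfolding vecs_def by auto
        moreover have "Phi_s n s u i = 0" using False unfolding Phi_s_def by simp
        moreover have "i div 4 \<notin> J" using False unfolding J_def by auto
        ultimately show ?thesis by (simp add: sum_blockB[OF finJ])
      qed
    qed
    moreover have "J \<subseteq> {..<n}" unfolding J_def by auto
    ultimately have "v \<in> S_s n s C1" using uc unfolding S_s_def by blast
    with vn show False by simp
  qed
  have wtle: "2 * wt n u \<le> wt (4*n) v"
  proof -
    have "wt (4*n) v = (\<Sum>j<n. bw (A j) + bw (B j) + bw (C j) + bw (D j))"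
      unfolding wt_sum sum4 by (simp add: bw_def A_def B_def C_def D_def)
    moreover have "2 * wt n u = (\<Sum>j<n. 2 * (if dec s (A j) (B j) (C j) (D j) \<noteq> 0 then 1 else 0))"
      unfolding wt_sum sum_distrib_left by (rule sum.cong) (auto simp: u_def)
    moreover have "(\<Sum>j<n. 2 * (if dec s (A j) (B j) (C j) (D j) \<noteq> 0 then 1 else 0))
        \<le> (\<Sum>j<n. bw (A j) + bw (B j) + bw (C j) + bw (D j))"
      by (rule sum_mono) (simp add: blk_wt[OF even])
    ultimately show ?thesis by simp
  qed
  show ?thesis using udual unot wtle by blast
qed


lemma dist_gen:
  assumes L1: "lin_subspace n C1" and L2: "lin_subspace n C2"
  shows "2 * Inf ((\<lambda>u. enat (wt n u)) ` (dual n C2 - C1))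
    \<le> Inf ((\<lambda>u. enat (wt (4*n) u)) ` (dual (4*n) (S_s n (\<not> s) C2) - S_s n s C1))"
proof (rule Inf_greatest)
  fix y assume "y \<in> (\<lambda>u. enat (wt (4*n) u)) ` (dual (4*n) (S_s n (\<not> s) C2) - S_s n s C1)"
  then obtain v where v: "v \<in> dual (4*n) (S_s n (\<not> s) C2)" "v \<notin> S_s n s C1"
    and y: "y = enat (wt (4*n) v)" by auto
  obtain u where u: "u \<in> dual n C2 - C1" and le: "2 * wt n u \<le> wt (4*n) v"
    using key[OF L1 L2 v] by blast
  have "Inf ((\<lambda>u. enat (wt n u)) ` (dual n C2 - C1)) \<le> enat (wt n u)"
    using u by (intro Inf_lower) auto
  then have "2 * Inf ((\<lambda>u. enat (wt n u)) ` (dual n C2 - C1)) \<le> 2 * enat (wt n u)"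
    by (simp add: mult_left_mono)
  also have "\<dots> = enat (2 * wt n u)" by (simp add: numeral_eq_enat)
  also have "\<dots> \<le> y" using le y by simp
  finally show "2 * Inf ((\<lambda>u. enat (wt n u)) ` (dual n C2 - C1)) \<le> y" .
qed

lemma orth_part:
  assumes css: "css_code n CX CZ"
  shows "\<forall>u\<in>SX' n CX. \<forall>v\<in>SZ' n CZ. dotp (4 * n) u v = 0"
proof (intro ballI)
  fix u v assume "u \<in> SX' n CX" "v \<in> SZ' n CZ"
  then obtain c J c' J' where c: "c \<in> CX" "J \<subseteq> {..<n}" "c' \<in> CZ" "J' \<subseteq> {..<n}"
    and u: "u = (\<lambda>i. Phi_s n True c i + (\<Sum>j\<in>J. blockB j i))"
    and v: "v = (\<lambda>i. Phi_s n False c' i + (\<Sum>j\<in>J'. blockB j i))"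
    unfolding SX'_eq SZ'_eq S_s_def by blast
  have fJ: "finite J" "finite J'" using c finite_subset by blast+
  have "dotp (4*n) u v = (\<Sum>j<n. tr (c j * c' j))"
    unfolding dotp_4
  proof (rule sum.cong)
    fix j assume "j \<in> {..<n}"
    then have jn: "j < n" by simp
    define e where "e = (if j \<in> J then 1 else (0::bit))"
    define e' where "e' = (if j \<in> J' then 1 else (0::bit))"
    have uj: "u (4*j) = phs True (c j) ! 0 + e" "u (4*j+1) = phs True (c j) ! 1 + e"
      "u (4*j+2) = phs True (c j) ! 2 + e" "u (4*j+3) = phs True (c j) ! 3 + e"
      unfolding u e_def using jn by (simp_all add: sum_blockB[OF fJ(1)] Phi_s_def)
    have vj: "v (4*j) = phs False (c' j) ! 0 + e'" "v (4*j+1) = phs False (c' j) ! 1 + e'"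
      "v (4*j+2) = phs False (c' j) ! 2 + e'" "v (4*j+3) = phs False (c' j) ! 3 + e'"
      unfolding v e'_def using jn by (simp_all add: sum_blockB[OF fJ(2)] Phi_s_def)
    show "u (4 * j) * v (4 * j) + u (4 * j + 1) * v (4 * j + 1) + u (4 * j + 2) * v (4 * j + 2) +
          u (4 * j + 3) * v (4 * j + 3) = tr (c j * c' j)"
      unfolding uj vj by (rule blk_orth)
  qed simp
  also have "\<dots> = tr (dotp n c c')" unfolding dotp_def by (simp add: tr_sum)
  also have "\<dots> = 0" using css c unfolding css_code_def by (simp add: tr_zero)
  finally show "dotp (4 * n) u v = 0" .
qed

theorem mainTheorem15:
  fixes n :: nat and CX CZ :: "(nat \<Rightarrow> gf4) set"
  assumes "css_code n CX CZ"
  shows "(\<forall>u\<in>SX' n CX. \<forall>v\<in>SZ' n CZ. dotp (4 * n) u v = 0)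
       \<and> 2 * css_dist n CX CZ \<le> css_dist (4 * n) (SX' n CX) (SZ' n CZ)"
proof
  show "\<forall>u\<in>SX' n CX. \<forall>v\<in>SZ' n CZ. dotp (4 * n) u v = 0" by (rule orth_part[OF assms])
  have LX: "lin_subspace n CX" and LZ: "lin_subspace n CZ" using assms unfolding css_code_def by auto
  have hX: "2 * dist_X n CX CZ \<le> dist_X (4*n) (SX' n CX) (SZ' n CZ)"
    using dist_gen[OF LX LZ, of True] unfolding dist_X_def SX'_eq SZ'_eq by simp
  have hZ: "2 * dist_Z n CX CZ \<le> dist_Z (4*n) (SX' n CX) (SZ' n CZ)"
    using dist_gen[OF LZ LX, of False] unfolding dist_Z_def SX'_eq SZ'_eq by simp
  have "2 * css_dist n CX CZ \<le> 2 * dist_X n CX CZ" "2 * css_dist n CX CZ \<le> 2 * dist_Z n CX CZ"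
    unfolding css_dist_def by (simp_all add: mult_left_mono)
  then show "2 * css_dist n CX CZ \<le> css_dist (4 * n) (SX' n CX) (SZ' n CZ)"
    using hX hZ unfolding css_dist_def by (meson min.boundedI order_trans)
qed

end
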